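(* In the concurrent tree algorithm described in the context, for every operation $Op$ and every tree node $v$ on $Op$'s traversal path, the procedure $\mathrm{execute\_until\_timestamp}(Op,v)$ (executing in $v$ all operations in $v$'s queue up to and including $Op$) finishes in a finite number of steps.
   Context: Setting: an asynchronous shared-memory system with a finite set $P$ of processes operating on a concurrent binary search tree with a fictive root whose only child is the real root. Every node $v$ has a unique id, a FIFO queue of operation descriptors, and a pointer to an immutable state record containing $\mathrm{Ts\_Mod}$ (the timestamp of the last modifying operation). Each operation $Op$ has a descriptor with a timestamp, a queue $Op.\mathrm{Traverse}$ of nodes, and a map $Op.\mathrm{Processed}$. Execution of $Op$ proceeds as follows. Insert the descriptor into the root queue, which assigns strictly increasing timestamps in insertion order. Set $Op.\mathrm{Traverse}$ to contain the root. While it is nonempty, take its head $v$, run $\mathrm{execute\_until\_timestamp}(Op,v)$, and pop $v$. $\mathrm{execute\_until\_timestamp}(Op,v)$ repeatedly reads the head descriptor $D$ of $v$'s queue and returns if the queue is empty or if $D.\mathrm{Timestamp}>Op.\mathrm{Timestamp}$. Otherwise it executes $D$ in $v$. Executing $D$ in $v$ consists of the following steps. - Compute the children $C$ of $v$ where $D$ continues. - For each $c\in C$: - push $c$ onto $D.\mathrm{Traverse}$; - if $c$'s $\mathrm{Ts\_Mod}<D.\mathrm{Timestamp}$, make one CAS attempt installing a new state reflecting $D$ with $\mathrm{Ts\_Mod}=D.\mathrm{Timestamp}$; - append $D$ to $c$'s queue unless already appended. - Record ($v$'s id, partial result) in $D.\mathrm{Processed}$ if absent. - Remove $D$ from the head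 of $v$'s queue if still there. No step is retried on failure. *)

theory Defs
  imports Main
begin

text \<open>
Descriptor ids are natural numbers; a descriptor's id coincides with the timestamp
it receives when it is (atomically) inserted into the fictive root's queue.
The concrete BST logic is left abstract:
  cont a s : the children (a finite list) in which an operation of kind a continues
             at a node whose state content is s;
  res a s  : the partial result recorded for a at such a node;
  upd a s  : the new state content of a child after reflecting operation a.
Every shared-memory access is one atomic step of the executing process.
\<close>

record ('n,'a,'r) desc =
  d_op :: 'a
  d_ts :: nat
  d_trav :: "'n list"      \<comment> \<open>all nodes ever pushed onto the Traverse queue\<close>
  d_head :: nat            \<comment> \<open>Traverse queue = drop d_head d_trav\<close>
  d_proc :: "'n \<Rightarrow> 'r option"

record ('n,'s,'a,'r) mem =
  m_queue :: "'n \<Rightarrow> nat list"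
  m_appd  :: "'n \<Rightarrow> nat set"            \<comment> \<open>descriptors ever appended to the queue\<close>
  m_nst   :: "'n \<Rightarrow> 's \<times> nat"          \<comment> \<open>state record: content and Ts_Mod\<close>
  m_descs :: "nat \<Rightarrow> ('n,'a,'r) desc option"
  m_clock :: nat                           \<comment> \<open>next timestamp\<close>

datatype ('n,'s,'r) pc =
    Idle
  | Trav nat
  | EutRead nat 'n
  | ExecCompute nat 'n nat
  | ExecChildren nat 'n nat "'n list" 'r
  | ExecReadC nat 'n nat 'n "'n list" 'r
  | ExecCAS nat 'n nat 'n "'n list" 'r "'s \<times> nat"
  | ExecAppend nat 'n nat 'n "'n list" 'r
  | ExecRemove nat 'n nat
  | PopTrav nat 'n

definition dsc :: "('n,'s,'a,'r) mem \<Rightarrow> nat \<Rightarrow> ('n,'a,'r) desc" where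
  "dsc m D = the (m_descs m D)"

definition upd_dsc :: "('n,'s,'a,'r) mem \<Rightarrow> nat \<Rightarrow> (('n,'a,'r) desc \<Rightarrow> ('n,'a,'r) desc)
    \<Rightarrow> ('n,'s,'a,'r) mem" where
  "upd_dsc m D f = m\<lparr>m_descs := (m_descs m)(D := map_option f (m_descs m D))\<rparr>"

text \<open>One atomic step of a process with program counter given; the argument a is the
(nondeterministically chosen) kind of the next operation, used only in state Idle.
Op = d is the operation whose traversal is executed, D the descriptor being executed.\<close>

fun pstep :: "('a \<Rightarrow> 's \<Rightarrow> 'n list) \<Rightarrow> ('a \<Rightarrow> 's \<Rightarrow> 'r) \<Rightarrow> ('a \<Rightarrow> 's \<Rightarrow> 's) \<Rightarrow> 'n \<Rightarrow> 'a
    \<Rightarrow> ('n,'s,'r) pc \<Rightarrow> ('n,'s,'a,'r) mem \<Rightarrow> ('n,'s,'r) pc \<times> ('n,'s,'a,'r) mem" where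
  "pstep cont res upd root a Idle m =
     (let d = m_clock m;
          D = \<lparr>d_op = a, d_ts = d, d_trav = [root], d_head = 0, d_proc = Map.empty\<rparr>
      in (Trav d, m\<lparr>m_descs := (m_descs m)(d \<mapsto> D),
                    m_queue := (m_queue m)(root := m_queue m root @ [d]),
                    m_appd := (m_appd m)(root := insert d (m_appd m root)),
                    m_clock := Suc d\<rparr>))"
| "pstep cont res upd root a (Trav d) m =
     (let Dd = dsc m d in
      if d_head Dd < length (d_trav Dd) then (EutRead d (d_trav Dd ! d_head Dd), m)
      else (Idle, m))"
| "pstep cont res upd root a (EutRead d v) m =
     (case m_queue m v of
        [] \<Rightarrow> (PopTrav d v, m)
      | D # _ \<Rightarrow> (if d_ts (dsc m D) > d_ts (dsc m d) then (PopTrav d v, m)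
                 else (ExecCompute d v D, m)))"
| "pstep cont res upd root a (ExecCompute d v D) m =
     (let s = fst (m_nst m v); b = d_op (dsc m D)
      in (ExecChildren d v D (cont b s) (res b s), m))"
| "pstep cont res upd root a (ExecChildren d v D (c # cs) r) m =
     (ExecReadC d v D c cs r,
      if c \<in> set (d_trav (dsc m D)) then m
      else upd_dsc m D (\<lambda>x. x\<lparr>d_trav := d_trav x @ [c]\<rparr>))"
| "pstep cont res upd root a (ExecChildren d v D [] r) m =
     (ExecRemove d v D,
      if d_proc (dsc m D) v = None then upd_dsc m D (\<lambda>x. x\<lparr>d_proc := (d_proc x)(v \<mapsto> r)\<rparr>)
      else m)"
| "pstep cont res upd root a (ExecReadC d v D c cs r) m =
     (if snd (m_nst m c) < d_ts (dsc m D) then (ExecCAS d v D c cs r (m_nst m c), m)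
      else (ExecAppend d v D c cs r, m))"
| "pstep cont res upd root a (ExecCAS d v D c cs r old) m =
     (ExecAppend d v D c cs r,
      if m_nst m c = old
      then m\<lparr>m_nst := (m_nst m)(c := (upd (d_op (dsc m D)) (fst old), d_ts (dsc m D)))\<rparr>
      else m)"
| "pstep cont res upd root a (ExecAppend d v D c cs r) m =
     (ExecChildren d v D cs r,
      if D \<in> m_appd m c then m
      else m\<lparr>m_queue := (m_queue m)(c := m_queue m c @ [D]),
             m_appd := (m_appd m)(c := insert D (m_appd m c))\<rparr>)"
| "pstep cont res upd root a (ExecRemove d v D) m =
     (EutRead d v,
      case m_queue m v of
        [] \<Rightarrow> m
      | D' # q \<Rightarrow> (if D' = D then m\<lparr>m_queue := (m_queue m)(v := q)\<rparr> else m))"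
| "pstep cont res upd root a (PopTrav d v) m =
     (Trav d, upd_dsc m d (\<lambda>x. x\<lparr>d_head := Suc (d_head x)\<rparr>))"

type_synonym ('p,'n,'s,'a,'r) config = "('n,'s,'a,'r) mem \<times> ('p \<Rightarrow> ('n,'s,'r) pc)"

definition step :: "('a \<Rightarrow> 's \<Rightarrow> 'n list) \<Rightarrow> ('a \<Rightarrow> 's \<Rightarrow> 'r) \<Rightarrow> ('a \<Rightarrow> 's \<Rightarrow> 's) \<Rightarrow> 'n
    \<Rightarrow> 'p \<Rightarrow> ('p,'n,'s,'a,'r) config \<Rightarrow> ('p,'n,'s,'a,'r) config \<Rightarrow> bool" where
  "step cont res upd root p cf cf' \<longleftrightarrow>
     (\<exists>a. cf' = (let (q, m') = pstep cont res upd root a (snd cf p) (fst cf)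
                  in (m', (snd cf)(p := q))))"

definition init_conf :: "('n \<Rightarrow> 's) \<Rightarrow> ('p,'n,'s,'a,'r) config" where
  "init_conf s0 = (\<lparr>m_queue = (\<lambda>_. []), m_appd = (\<lambda>_. {}), m_nst = (\<lambda>v. (s0 v, 0)),
                     m_descs = (\<lambda>_. None), m_clock = 1\<rparr>, (\<lambda>_. Idle))"

definition execution :: "('a \<Rightarrow> 's \<Rightarrow> 'n list) \<Rightarrow> ('a \<Rightarrow> 's \<Rightarrow> 'r) \<Rightarrow> ('a \<Rightarrow> 's \<Rightarrow> 's) \<Rightarrow> 'n
    \<Rightarrow> ('n \<Rightarrow> 's) \<Rightarrow> (nat \<Rightarrow> ('p,'n,'s,'a,'r) config) \<Rightarrow> (nat \<Rightarrow> 'p) \<Rightarrow> bool" where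
  "execution cont res upd root s0 \<sigma> sched \<longleftrightarrow>
     \<sigma> 0 = init_conf s0 \<and> (\<forall>i. step cont res upd root (sched i) (\<sigma> i) (\<sigma> (Suc i)))"

end

theory Submission imports Defs "HOL-Library.Product_Lexorder" begin

definition Inv :: "('n,'s,'a,'r) mem \<Rightarrow> bool" where
 "Inv m \<longleftrightarrow> 1 \<le> m_clock m \<and> (\<forall>D. 1 \<le> D \<longrightarrow> D < m_clock m \<longrightarrow> (\<exists>x. m_descs m D = Some x \<and> d_ts x = D))
   \<and> (\<forall>c. m_appd m c \<subseteq> {1..<m_clock m}) \<and> (\<forall>c. set (m_queue m c) \<subseteq> m_appd m c) \<and> (\<forall>c. distinct (m_queue m c))"

fun pcn :: "('n,'s,'r) pc \<Rightarrow> nat list" where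
  "pcn Idle = []" | "pcn (Trav d) = [d]" | "pcn (EutRead d v) = [d]" | "pcn (ExecCompute d v D) = [d,D]"
 | "pcn (ExecChildren d v D cs r) = [d,D]" | "pcn (ExecReadC d v D c cs r) = [d,D]"
 | "pcn (ExecCAS d v D c cs r ol) = [d,D]" | "pcn (ExecAppend d v D c cs r) = [d,D]"
 | "pcn (ExecRemove d v D) = [d,D]" | "pcn (PopTrav d v) = [d]"

definition pc_ok :: "('n,'s,'a,'r) mem \<Rightarrow> ('n,'s,'r) pc \<Rightarrow> bool" where
  "pc_ok m pc \<longleftrightarrow> (\<forall>x\<in>set (pcn pc). 1 \<le> x \<and> x < m_clock m)"

lemma upd_dsc_simps[simp]: "m_queue (upd_dsc m D f) = m_queue m" "m_appd (upd_dsc m D f) = m_appd m"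
  "m_clock (upd_dsc m D f) = m_clock m" "m_nst (upd_dsc m D f) = m_nst m"
  by (simp_all add: upd_dsc_def)

lemma Inv_upd_dsc: "Inv m \<Longrightarrow> (\<And>x. d_ts (f x) = d_ts x) \<Longrightarrow> Inv (upd_dsc m D f)"
  unfolding Inv_def by (auto simp: upd_dsc_def)

lemma Inv_dsc: "Inv m \<Longrightarrow> 1 \<le> D \<Longrightarrow> D < m_clock m \<Longrightarrow> d_ts (dsc m D) = D"
  unfolding Inv_def dsc_def by force

lemma Inv_appd: "Inv m \<Longrightarrow> x \<in> m_appd m c \<Longrightarrow> 1 \<le> x \<and> x < m_clock m"
  unfolding Inv_def by (meson atLeastLessThan_iff subsetD)

lemma Inv_queue: "Inv m \<Longrightarrow> x \<in> set (m_queue m c) \<Longrightarrow> x \<in> m_appd m c"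
  unfolding Inv_def by blast

lemma Inv_distinct: "Inv m \<Longrightarrow> distinct (m_queue m c)"
  unfolding Inv_def by blast

lemma Inv_nst[simp]: "Inv (m\<lparr>m_nst := f\<rparr>) = Inv m"
  by (simp add: Inv_def)

lemma Inv_append:
  assumes "Inv m" "x \<notin> m_appd m c" "1 \<le> x" "x < m_clock m"
  shows "Inv (m\<lparr>m_queue := (m_queue m)(c := m_queue m c @ [x]), m_appd := (m_appd m)(c := insert x (m_appd m c))\<rparr>)"
proof -
  have "x \<notin> set (m_queue m c)" using assms(1,2) Inv_queue by metis
  then show ?thesis using assms unfolding Inv_def by auto
qed

lemma Inv_remove:
  assumes "Inv m" "m_queue m v = y # q"
  shows "Inv (m\<lparr>m_queue := (m_queue m)(v := q)\<rparr>)"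
proof -
  have "distinct (y#q)" "set (y#q) \<subseteq> m_appd m v" using assms unfolding Inv_def by metis+
  then show ?thesis using assms unfolding Inv_def by auto
qed

lemma Inv_new:
  assumes "Inv m"
  shows "Inv (m\<lparr>m_descs := (m_descs m)(m_clock m \<mapsto> \<lparr>d_op = a, d_ts = m_clock m, d_trav = tr, d_head = 0, d_proc = Map.empty\<rparr>),
                    m_queue := (m_queue m)(root := m_queue m root @ [m_clock m]),
                    m_appd := (m_appd m)(root := insert (m_clock m) (m_appd m root)),
                    m_clock := Suc (m_clock m)\<rparr>)" (is "Inv ?m")
proof -
  have nA: "\<And>c. m_clock m \<notin> m_appd m c" using Inv_appd[OF assms] by (metis less_irrefl)
  have nQ: "m_clock m \<notin> set (m_queue m root)" using Inv_queue[OF assms] nA by metis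
  have c1: "1 \<le> m_clock m" using assms unfolding Inv_def by blast
  have d: "\<forall>D. 1 \<le> D \<longrightarrow> D < m_clock ?m \<longrightarrow> (\<exists>x. m_descs ?m D = Some x \<and> d_ts x = D)"
  proof (intro allI impI)
    fix D assume "1 \<le> D" "D < m_clock ?m"
    then have "D = m_clock m \<or> D < m_clock m" by auto
    then show "\<exists>x. m_descs ?m D = Some x \<and> d_ts x = D"
    proof
      assume "D < m_clock m"
      then show ?thesis using assms \<open>1 \<le> D\<close> unfolding Inv_def by auto
    qed simp
  qed
  have a: "\<forall>c. m_appd ?m c \<subseteq> {1..<m_clock ?m}"
  proof (intro allI subsetI)
    fix c y assume "y \<in> m_appd ?m c"
    then have "y = m_clock m \<or> y \<in> m_appd m c" by (auto split: if_splits)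
    then show "y \<in> {1..<m_clock ?m}" using Inv_appd[OF assms, of y c] c1 by auto
  qed
  have q: "\<forall>c. set (m_queue ?m c) \<subseteq> m_appd ?m c"
    using Inv_queue[OF assms] by auto
  have di: "\<forall>c. distinct (m_queue ?m c)"
    using Inv_distinct[OF assms] nQ by auto
  show ?thesis unfolding Inv_def using d a q di by simp
qed

lemma pstep_inv:
  assumes "Inv m" "pc_ok m pc" "pstep cont res upd root a pc m = (pc', m')"
  shows "Inv m' \<and> pc_ok m' pc' \<and> m_clock m \<le> m_clock m'"
proof (cases pc)
  case Idle
  have "Inv m'" using assms Idle Inv_new[OF assms(1)] by (auto simp: Let_def)
  moreover have "1 \<le> m_clock m" using assms unfolding Inv_def by blast
  ultimately show ?thesis using assms Idle by (auto simp: pc_ok_def Let_def)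
next
  case (Trav x)
  then show ?thesis using assms by (auto simp: pc_ok_def Let_def split: if_splits)
next
  case (EutRead x v)
  have mm: "m' = m" using assms(3) EutRead by (auto split: if_splits list.splits)
  show ?thesis
  proof (cases "m_queue m v")
    case Nil
    then show ?thesis using assms EutRead mm by (auto simp: pc_ok_def)
  next
    case (Cons y q)
    have "y \<in> m_appd m v" using Inv_queue[OF assms(1)] Cons by (metis list.set_intros(1))
    then have y: "1 \<le> y \<and> y < m_clock m" using Inv_appd[OF assms(1)] by metis
    have "pc' = PopTrav x v \<or> pc' = ExecCompute x v y" using assms(3) EutRead Cons by (auto split: if_splits)
    then show ?thesis using assms(2) EutRead mm y assms(1) by (auto simp: pc_ok_def)
  qed
next
  case (ExecCompute x1 x2 x3)
  then show ?thesis using assms by (auto simp: pc_ok_def Let_def)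
next
  case (ExecChildren x1 x2 x3 cs r)
  then show ?thesis using assms by (cases cs) (auto simp: pc_ok_def intro!: Inv_upd_dsc)
next
  case (ExecReadC x1 x2 x3 x4 x5 x6)
  then show ?thesis using assms by (auto simp: pc_ok_def split: if_splits)
next
  case (ExecCAS x1 x2 x3 x4 x5 x6 x7)
  then show ?thesis using assms by (cases "m_nst m x4 = x7") (auto simp: pc_ok_def)
next
  case (ExecAppend x1 x2 x3 x4 x5 x6)
  show ?thesis
  proof (cases "x3 \<in> m_appd m x4")
    case False
    have "1 \<le> x3" "x3 < m_clock m" using assms ExecAppend by (auto simp: pc_ok_def)
    then show ?thesis using assms ExecAppend False Inv_append[OF assms(1) False] by (auto simp: pc_ok_def)
  qed (use assms ExecAppend in \<open>auto simp: pc_ok_def\<close>)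
next
  case (ExecRemove x1 x2 x3)
  show ?thesis
  proof (cases "m_queue m x2")
    case (Cons y q)
    then show ?thesis using assms ExecRemove Inv_remove[OF assms(1) Cons] by (auto simp: pc_ok_def)
  qed (use assms ExecRemove in \<open>auto simp: pc_ok_def\<close>)
next
  case (PopTrav x1 x2)
  then show ?thesis using assms by (auto simp: pc_ok_def intro!: Inv_upd_dsc)
qed

lemma pstep_v:
  assumes "Inv m" "pc_ok m pc" "pstep cont res upd root a pc m = (pc', m')"
  shows "(m_queue m' v = m_queue m v \<and> m_appd m' v = m_appd m v)
   \<or> (\<exists>x. x \<notin> m_appd m v \<and> m_queue m' v = m_queue m v @ [x] \<and> m_appd m' v = insert x (m_appd m v))
   \<or> (\<exists>x. m_queue m v = x # m_queue m' v \<and> m_appd m' v = m_appd m v)"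
proof (cases pc)
  case Idle
  show ?thesis
  proof (cases "v = root")
    case True
    have "m_clock m \<notin> m_appd m v" using assms(1) unfolding Inv_def
      by (meson atLeastLessThan_iff less_irrefl subsetD)
    then show ?thesis using assms Idle True by (auto simp: Let_def)
  qed (use assms Idle in \<open>auto simp: Let_def\<close>)
next
  case (ExecChildren x1 x2 x3 cs r)
  then show ?thesis using assms by (cases cs) (auto split: if_splits)
next
  case (ExecAppend x1 x2 x3 x4 x5 x6)
  then show ?thesis using assms by (auto split: if_splits)
next
  case (ExecRemove x1 x2 x3)
  then show ?thesis using assms by (auto split: if_splits list.splits)
qed (use assms in \<open>auto simp: Let_def split: if_splits list.splits\<close>)


definition good :: "nat \<Rightarrow> nat list \<Rightarrow> nat set \<Rightarrow> nat \<Rightarrow> bool" where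
  "good d qv av D \<longleftrightarrow> 1 \<le> D \<and> D \<le> d \<and> D \<in> av \<and> (D \<in> set qv \<longrightarrow> hd qv = D)"

fun pc_dv :: "('n,'s,'r) pc \<Rightarrow> (nat \<times> 'n) option" where
  "pc_dv (EutRead d v) = Some (d,v)"
| "pc_dv (ExecCompute d v D) = Some (d,v)"
| "pc_dv (ExecChildren d v D cs r) = Some (d,v)"
| "pc_dv (ExecReadC d v D c cs r) = Some (d,v)"
| "pc_dv (ExecCAS d v D c cs r ol) = Some (d,v)"
| "pc_dv (ExecAppend d v D c cs r) = Some (d,v)"
| "pc_dv (ExecRemove d v D) = Some (d,v)"
| "pc_dv _ = None"

fun pc_D :: "('n,'s,'r) pc \<Rightarrow> nat option" where
  "pc_D (ExecCompute d v D) = Some D"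
| "pc_D (ExecChildren d v D cs r) = Some D"
| "pc_D (ExecReadC d v D c cs r) = Some D"
| "pc_D (ExecCAS d v D c cs r ol) = Some D"
| "pc_D (ExecAppend d v D c cs r) = Some D"
| "pc_D (ExecRemove d v D) = Some D"
| "pc_D _ = None"

fun ph :: "('n,'s,'r) pc \<Rightarrow> nat \<times> nat" where
  "ph (EutRead d v) = (2,0)"
| "ph (ExecCompute d v D) = (1,0)"
| "ph (ExecChildren d v D cs r) = (0, 4 * length cs + 1)"
| "ph (ExecReadC d v D c cs r) = (0, 4 * length cs + 4)"
| "ph (ExecCAS d v D c cs r ol) = (0, 4 * length cs + 3)"
| "ph (ExecAppend d v D c cs r) = (0, 4 * length cs + 2)"
| "ph _ = (0,0)"

definition Loop :: "nat \<Rightarrow> 'n \<Rightarrow> nat list \<Rightarrow> nat set \<Rightarrow> ('n,'s,'r) pc \<Rightarrow> bool" where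
  "Loop d v qv av pc \<longleftrightarrow> pc_dv pc = Some (d,v) \<and> (\<forall>D. pc_D pc = Some D \<longrightarrow> good d qv av D)"

definition wt :: "nat \<Rightarrow> nat list \<Rightarrow> nat set \<Rightarrow> nat \<Rightarrow> nat" where
  "wt d qv av D = (if D \<notin> av then 2 else if D \<in> set qv then 1 else 0)"

definition flag :: "nat list \<Rightarrow> ('n,'s,'r) pc \<Rightarrow> nat" where
  "flag qv pc = (case pc_D pc of Some D \<Rightarrow> if D \<in> set qv then 0 else 1 | None \<Rightarrow> 0)"

definition meas :: "nat \<Rightarrow> nat list \<Rightarrow> nat set \<Rightarrow> ('n,'s,'r) pc \<Rightarrow> nat \<times> nat \<times> nat" where
  "meas d qv av pc = ((\<Sum>D\<in>{1..d}. wt d qv av D) + flag qv pc, ph pc)"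

lemma env_step:
  assumes dq: "distinct qv" and sq: "set qv \<subseteq> av"
    and L: "Loop d v qv av pc"
    and ch: "(qv' = qv \<and> av' = av)
   \<or> (\<exists>x. x \<notin> av \<and> qv' = qv @ [x] \<and> av' = insert x av)
   \<or> (\<exists>x. qv = x # qv' \<and> av' = av)"
  shows "Loop d v qv' av' pc \<and> meas d qv' av' pc \<le> meas d qv av pc"
proof -
  have wle: "\<And>D. wt d qv' av' D \<le> wt d qv av D"
    using ch unfolding wt_def by auto
  have sub: "av \<subseteq> av'" using ch by auto
  have G: "\<And>D. good d qv av D \<Longrightarrow> good d qv' av' D"
  proof -
    fix D assume g: "good d qv av D"
    show "good d qv' av' D"
      using ch
    proof (elim disjE exE conjE)
      fix x assume "x \<notin> av" "qv' = qv @ [x]" "av' = insert x av"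
      then show ?thesis using g unfolding good_def by (cases qv) auto
    next
      fix x assume "qv = x # qv'" "av' = av"
      then show ?thesis using g dq unfolding good_def by auto
    qed (use g in auto)
  qed
  have L': "Loop d v qv' av' pc" using L G unfolding Loop_def by auto
  have "(\<Sum>D\<in>{1..d}. wt d qv' av' D) + flag qv' pc \<le> (\<Sum>D\<in>{1..d}. wt d qv av D) + flag qv pc"
  proof (cases "flag qv' pc \<le> flag qv pc")
    case True
    have "(\<Sum>D\<in>{1..d}. wt d qv' av' D) \<le> (\<Sum>D\<in>{1..d}. wt d qv av D)"
      using wle by (intro sum_mono) auto
    then show ?thesis using True by linarith
  next
    case False
    then obtain D where pD: "pc_D pc = Some D" and Dq: "D \<in> set qv" and Dq': "D \<notin> set qv'"
      unfolding flag_def by (auto split: option.splits if_splits)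
    have g: "good d qv av D" using L pD unfolding Loop_def by auto
    have "wt d qv' av' D < wt d qv av D" using g Dq Dq' sub unfolding good_def wt_def by auto
    moreover have "D \<in> {1..d}" using g unfolding good_def by auto
    ultimately have "(\<Sum>D\<in>{1..d}. wt d qv' av' D) < (\<Sum>D\<in>{1..d}. wt d qv av D)"
      using wle by (intro sum_strict_mono_ex1) auto
    moreover have "flag qv' pc \<le> 1" "flag qv pc = 0" using pD Dq Dq' unfolding flag_def by auto
    ultimately show ?thesis by linarith
  qed
  then show ?thesis using L' unfolding meas_def by (auto simp: less_eq_prod_def)
qed


lemma same_v:
  assumes "m_queue m' v = m_queue m v" "m_appd m' v = m_appd m v"
    "Loop d v (m_queue m v) (m_appd m v) pc" "pc_dv pc' = Some (d,v)" "pc_D pc' = pc_D pc"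
    "ph pc' < ph pc"
  shows "Loop d v (m_queue m' v) (m_appd m' v) pc' \<and>
         meas d (m_queue m' v) (m_appd m' v) pc' < meas d (m_queue m v) (m_appd m v) pc"
proof -
  have f: "flag (m_queue m' v) pc' = flag (m_queue m v) pc" unfolding flag_def assms(1) assms(5) by (rule refl)
  have l: "Loop d v (m_queue m' v) (m_appd m' v) pc'" using assms(1-5) unfolding Loop_def by simp
  show ?thesis using f l assms(1,2,6) unfolding meas_def by simp
qed

lemma own_step:
  assumes I: "Inv m" and ok: "pc_ok m pc" and L: "Loop d v (m_queue m v) (m_appd m v) pc"
    and st: "pstep cont res upd root a pc m = (pc', m')"
  shows "pc' = PopTrav d v \<or> (Loop d v (m_queue m' v) (m_appd m' v) pc' \<and>
         meas d (m_queue m' v) (m_appd m' v) pc' < meas d (m_queue m v) (m_appd m v) pc)"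
proof -
  have dv: "pc_dv pc = Some (d,v)" using L unfolding Loop_def by auto
  have gD: "\<And>D. pc_D pc = Some D \<Longrightarrow> good d (m_queue m v) (m_appd m v) D"
    using L unfolding Loop_def by auto
  show ?thesis
  proof (cases pc)
    case (EutRead d1 v1)
    then have e: "d1 = d" "v1 = v" using dv by auto
    have mm: "m' = m" using st EutRead by (auto split: if_splits list.splits)
    show ?thesis
    proof (cases "m_queue m v")
      case Nil
      then show ?thesis using st EutRead e by auto
    next
      case (Cons y q)
      have yA: "y \<in> m_appd m v" using Inv_queue[OF I] Cons by (metis list.set_intros(1))
      then have y: "1 \<le> y \<and> y < m_clock m" using Inv_appd[OF I] by metis
      have dd: "1 \<le> d \<and> d < m_clock m" using ok EutRead e by (auto simp: pc_ok_def)
      show ?thesis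
      proof (cases "d_ts (dsc m y) > d_ts (dsc m d)")
        case True
        then show ?thesis using st EutRead e Cons by auto
      next
        case False
        then have yd: "y \<le> d" using Inv_dsc[OF I] y dd by auto
        have pc': "pc' = ExecCompute d v y" using st EutRead e Cons False by auto
        have "good d (m_queue m' v) (m_appd m' v) y" using yd y yA mm Cons unfolding good_def by auto
        moreover have "flag (m_queue m' v) pc' = 0" using pc' mm Cons unfolding flag_def by auto
        ultimately show ?thesis using pc' mm EutRead e unfolding Loop_def meas_def by auto
      qed
    qed
  next
    case (ExecCompute d1 v1 D)
    have e: "d1 = d" "v1 = v" using dv ExecCompute by auto
    have "m' = m" "\<exists>cs r. pc' = ExecChildren d v D cs r" using st ExecCompute e by (auto simp: Let_def)
    then show ?thesis using same_v[OF _ _ L, of m' pc'] ExecCompute by auto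
  next
    case (ExecChildren d1 v1 D cs r)
    have e: "d1 = d" "v1 = v" using dv ExecChildren by auto
    show ?thesis
    proof (cases cs)
      case Nil
      have "pc' = ExecRemove d v D" "m_queue m' v = m_queue m v" "m_appd m' v = m_appd m v"
        using st ExecChildren e Nil by (auto split: if_splits)
      then show ?thesis using same_v[OF _ _ L, of m' pc'] ExecChildren Nil by simp
    next
      case (Cons c cs')
      have "pc' = ExecReadC d v D c cs' r" "m_queue m' v = m_queue m v" "m_appd m' v = m_appd m v"
        using st ExecChildren e Cons by (auto split: if_splits)
      then show ?thesis using same_v[OF _ _ L, of m' pc'] ExecChildren Cons by simp
    qed
  next
    case (ExecReadC d1 v1 D c cs r)
    have e: "d1 = d" "v1 = v" using dv ExecReadC by auto
    have "m' = m" "pc' = ExecAppend d v D c cs r \<or> (\<exists>ol. pc' = ExecCAS d v D c cs r ol)"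
      using st ExecReadC e by (auto split: if_splits)
    then show ?thesis using same_v[OF _ _ L, of m' pc'] ExecReadC by auto
  next
    case (ExecCAS d1 v1 D c cs r ol)
    have e: "d1 = d" "v1 = v" using dv ExecCAS by auto
    have "m_queue m' v = m_queue m v" "m_appd m' v = m_appd m v" "pc' = ExecAppend d v D c cs r"
      using st ExecCAS e by (auto split: if_splits)
    then show ?thesis using same_v[OF _ _ L, of m' pc'] ExecCAS by auto
  next
    case (ExecAppend d1 v1 D c cs r)
    have g: "good d (m_queue m v) (m_appd m v) D" using gD ExecAppend by auto
    have e: "d1 = d" "v1 = v" using dv ExecAppend by auto
    have pc': "pc' = ExecChildren d v D cs r" using st ExecAppend e by auto
    have "m_queue m' v = m_queue m v \<and> m_appd m' v = m_appd m v"
    proof (cases "D \<in> m_appd m c")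
      case True
      then show ?thesis using st ExecAppend e by auto
    next
      case False
      then have "c \<noteq> v" using g unfolding good_def by auto
      then show ?thesis using st ExecAppend e False by auto
    qed
    then show ?thesis using same_v[OF _ _ L, of m' pc'] ExecAppend pc' by auto
  next
    case (ExecRemove d1 v1 D)
    have g: "good d (m_queue m v) (m_appd m v) D" using gD ExecRemove by auto
    have e: "d1 = d" "v1 = v" using dv ExecRemove by auto
    have pc': "pc' = EutRead d v" using st ExecRemove e by auto
    have L': "Loop d v (m_queue m' v) (m_appd m' v) pc'" using pc' unfolding Loop_def by auto
    have fl': "flag (m_queue m' v) pc' = 0" using pc' unfolding flag_def by auto
    have Dr: "D \<in> {1..d}" using g unfolding good_def by auto
    have "(\<Sum>D\<in>{1..d}. wt d (m_queue m' v) (m_appd m' v) D) < (\<Sum>D\<in>{1..d}. wt d (m_queue m v) (m_appd m v) D) + flag (m_queue m v) pc"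
    proof (cases "m_queue m v")
      case Nil
      then have "m' = m" using st ExecRemove e by auto
      moreover have "flag (m_queue m v) pc = 1" using Nil ExecRemove unfolding flag_def by auto
      ultimately show ?thesis by simp
    next
      case (Cons y q)
      show ?thesis
      proof (cases "y = D")
        case True
        have m': "m' = m\<lparr>m_queue := (m_queue m)(v := q)\<rparr>" using st ExecRemove e Cons True by auto
        have dq: "distinct (y # q)" using Inv_distinct[OF I, of v] Cons by simp
        have "\<And>x. wt d q (m_appd m v) x \<le> wt d (m_queue m v) (m_appd m v) x"
          using Cons unfolding wt_def by auto
        moreover have "wt d q (m_appd m v) D < wt d (m_queue m v) (m_appd m v) D"
          using Cons True dq g unfolding wt_def good_def by auto
        ultimately have "(\<Sum>x\<in>{1..d}. wt d q (m_appd m v) x) < (\<Sum>x\<in>{1..d}. wt d (m_queue m v) (m_appd m v) x)"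
          using Dr by (intro sum_strict_mono_ex1) auto
        then show ?thesis using m' by simp
      next
        case False
        have "m' = m" using st ExecRemove e Cons False by auto
        moreover have "D \<notin> set (m_queue m v)" using g Cons False unfolding good_def by auto
        then have "flag (m_queue m v) pc = 1" using ExecRemove unfolding flag_def by auto
        ultimately show ?thesis by simp
      qed
    qed
    then have "meas d (m_queue m' v) (m_appd m' v) pc' < meas d (m_queue m v) (m_appd m v) pc"
      using fl' unfolding meas_def by simp
    then show ?thesis using L' by auto
  qed (use dv in auto)
qed


lemma exec_step:
  assumes "execution cont res upd root s0 \<sigma> sched"
  shows "\<exists>a. fst (\<sigma> (Suc i)) = snd (pstep cont res upd root a (snd (\<sigma> i) (sched i)) (fst (\<sigma> i)))
          \<and> snd (\<sigma> (Suc i)) = (snd (\<sigma> i))(sched i := fst (pstep cont res upd root a (snd (\<sigma> i) (sched i)) (fst (\<sigma> i))))"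
proof -
  from assms have "step cont res upd root (sched i) (\<sigma> i) (\<sigma> (Suc i))" unfolding execution_def by blast
  then obtain a where "\<sigma> (Suc i) = (let (q, m') = pstep cont res upd root a (snd (\<sigma> i) (sched i)) (fst (\<sigma> i))
                  in (m', (snd (\<sigma> i))(sched i := q)))" unfolding step_def by blast
  then show ?thesis by (auto simp: case_prod_beta)
qed

lemma pc_ok_mono: "pc_ok m pc \<Longrightarrow> m_clock m \<le> m_clock m' \<Longrightarrow> pc_ok m' pc"
  unfolding pc_ok_def by auto

lemma GI:
  assumes "execution cont res upd root s0 \<sigma> sched"
  shows "Inv (fst (\<sigma> i)) \<and> (\<forall>q. pc_ok (fst (\<sigma> i)) (snd (\<sigma> i) q))"
proof (induction i)
  case 0
  have "\<sigma> 0 = init_conf s0" using assms unfolding execution_def by blast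
  then show ?case unfolding init_conf_def Inv_def pc_ok_def by auto
next
  case (Suc i)
  obtain a where a: "fst (\<sigma> (Suc i)) = snd (pstep cont res upd root a (snd (\<sigma> i) (sched i)) (fst (\<sigma> i)))"
     "snd (\<sigma> (Suc i)) = (snd (\<sigma> i))(sched i := fst (pstep cont res upd root a (snd (\<sigma> i) (sched i)) (fst (\<sigma> i))))"
    using exec_step[OF assms] by blast
  obtain pc' m' where pm: "pstep cont res upd root a (snd (\<sigma> i) (sched i)) (fst (\<sigma> i)) = (pc', m')"
    by (cases "pstep cont res upd root a (snd (\<sigma> i) (sched i)) (fst (\<sigma> i))") auto
  have R: "Inv m' \<and> pc_ok m' pc' \<and> m_clock (fst (\<sigma> i)) \<le> m_clock m'"
    using pstep_inv[OF _ _ pm] Suc.IH by blast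
  show ?case
  proof (intro conjI allI)
    show "Inv (fst (\<sigma> (Suc i)))" using R a pm by simp
    fix q
    show "pc_ok (fst (\<sigma> (Suc i))) (snd (\<sigma> (Suc i)) q)"
    proof (cases "q = sched i")
      case True then show ?thesis using R a pm by simp
    next
      case False then show ?thesis using R a pm Suc.IH pc_ok_mono by auto
    qed
  qed
qed

lemma reach:
  assumes ex: "execution cont res upd root s0 \<sigma> sched"
    and k2: "snd (\<sigma> (Suc k)) p = EutRead d v"
    and inf: "\<And>i. \<exists>t\<ge>i. sched t = p"
  shows "\<exists>i\<ge>Suc k. snd (\<sigma> i) p = PopTrav d v"
proof (rule ccontr)
  assume "\<not> ?thesis"
  then have NP: "\<And>i. i \<ge> Suc k \<Longrightarrow> snd (\<sigma> i) p \<noteq> PopTrav d v" by blast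
  define LL where "LL i = Loop d v (m_queue (fst (\<sigma> i)) v) (m_appd (fst (\<sigma> i)) v) (snd (\<sigma> i) p)" for i
  define M where "M i = meas d (m_queue (fst (\<sigma> i)) v) (m_appd (fst (\<sigma> i)) v) (snd (\<sigma> i) p)" for i
  have stp: "LL (Suc i) \<and> M (Suc i) \<le> M i \<and> (sched i = p \<longrightarrow> M (Suc i) < M i)"
    if "i \<ge> Suc k" "LL i" for i
  proof -
    obtain a where a: "fst (\<sigma> (Suc i)) = snd (pstep cont res upd root a (snd (\<sigma> i) (sched i)) (fst (\<sigma> i)))"
       "snd (\<sigma> (Suc i)) = (snd (\<sigma> i))(sched i := fst (pstep cont res upd root a (snd (\<sigma> i) (sched i)) (fst (\<sigma> i))))"
      using exec_step[OF ex] by blast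
    obtain pc' m' where pm: "pstep cont res upd root a (snd (\<sigma> i) (sched i)) (fst (\<sigma> i)) = (pc', m')"
      by (cases "pstep cont res upd root a (snd (\<sigma> i) (sched i)) (fst (\<sigma> i))") auto
    have G: "Inv (fst (\<sigma> i))" "\<And>q. pc_ok (fst (\<sigma> i)) (snd (\<sigma> i) q)" using GI[OF ex] by blast+
    have G': "Inv (fst (\<sigma> (Suc i)))" using GI[OF ex] by blast
    show ?thesis
    proof (cases "sched i = p")
      case True
      have o: "pc' = PopTrav d v \<or> (Loop d v (m_queue m' v) (m_appd m' v) pc' \<and>
         meas d (m_queue m' v) (m_appd m' v) pc' < meas d (m_queue (fst (\<sigma> i)) v) (m_appd (fst (\<sigma> i)) v) (snd (\<sigma> i) p))"
        using own_step[OF G(1) G(2) _ pm[unfolded True]] \<open>LL i\<close> pm True unfolding LL_def by blast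
      have "snd (\<sigma> (Suc i)) p = pc'" "fst (\<sigma> (Suc i)) = m'" using a pm True by auto
      moreover have "pc' \<noteq> PopTrav d v" using NP[of "Suc i"] that calculation by auto
      ultimately show ?thesis using o unfolding LL_def M_def by auto
    next
      case False
      have pp: "snd (\<sigma> (Suc i)) p = snd (\<sigma> i) p" "fst (\<sigma> (Suc i)) = m'" using a pm False by auto
      have ch: "(m_queue m' v = m_queue (fst (\<sigma> i)) v \<and> m_appd m' v = m_appd (fst (\<sigma> i)) v)
       \<or> (\<exists>x. x \<notin> m_appd (fst (\<sigma> i)) v \<and> m_queue m' v = m_queue (fst (\<sigma> i)) v @ [x] \<and> m_appd m' v = insert x (m_appd (fst (\<sigma> i)) v))
       \<or> (\<exists>x. m_queue (fst (\<sigma> i)) v = x # m_queue m' v \<and> m_appd m' v = m_appd (fst (\<sigma> i)) v)"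
        using pstep_v[OF G(1) G(2) pm] by blast
      have e: "Loop d v (m_queue m' v) (m_appd m' v) (snd (\<sigma> i) p) \<and>
        meas d (m_queue m' v) (m_appd m' v) (snd (\<sigma> i) p) \<le> meas d (m_queue (fst (\<sigma> i)) v) (m_appd (fst (\<sigma> i)) v) (snd (\<sigma> i) p)"
        by (rule env_step[OF Inv_distinct[OF G(1)] _ \<open>LL i\<close>[unfolded LL_def] ch])
           (use Inv_queue[OF G(1)] in blast)
      then show ?thesis using pp False unfolding LL_def M_def by auto
    qed
  qed
  have LLk: "LL (Suc k)" using k2 unfolding LL_def Loop_def by simp
  have LLall: "LL i" if "i \<ge> Suc k" for i
    using that
  proof (induction i rule: dec_induct)
    case base then show ?case using LLk by simp
  next
    case (step n) then show ?case using stp by blast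
  qed
  have mono: "M (i + n) \<le> M i" if "i \<ge> Suc k" for i n
  proof (induction n)
    case 0 then show ?case by simp
  next
    case (Suc n)
    have "M (Suc (i + n)) \<le> M (i + n)" using stp[of "i+n"] LLall[of "i+n"] that by auto
    then show ?case using Suc.IH by simp
  qed
  have F: "\<And>i. i \<ge> Suc k \<Longrightarrow> M i = x \<Longrightarrow> False" for x
  proof (induction x rule: less_induct)
    case (less x i)
    obtain t where t: "t \<ge> i" "sched t = p" using inf by blast
    have "M t \<le> M i" using mono[OF less.prems(1), of "t - i"] t by simp
    moreover have "M (Suc t) < M t" using stp[of t] LLall[of t] t less.prems(1) by auto
    ultimately have "M (Suc t) < x" using less.prems(2) by simp
    then show False using less.IH[of "M (Suc t)" "Suc t"] t less.prems(1) by simp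
  qed
  show False using F[of "Suc k" "M (Suc k)"] by simp
qed


theorem lemma2:
  fixes cont :: "'a \<Rightarrow> 's \<Rightarrow> 'n list" and res :: "'a \<Rightarrow> 's \<Rightarrow> 'r"
    and upd :: "'a \<Rightarrow> 's \<Rightarrow> 's" and root :: 'n and s0 :: "'n \<Rightarrow> 's"
    and \<sigma> :: "nat \<Rightarrow> ('p::finite,'n,'s,'a,'r) config" and sched :: "nat \<Rightarrow> 'p"
    and p :: 'p and d :: nat and v :: 'n and k :: nat
  assumes "execution cont res upd root s0 \<sigma> sched"
    and "sched k = p" and "snd (\<sigma> k) p = Trav d" and "snd (\<sigma> (Suc k)) p = EutRead d v"
  shows "\<exists>N. \<forall>j \<ge> Suc k. N \<le> card {i. Suc k \<le> i \<and> i < j \<and> sched i = p}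
             \<longrightarrow> (\<exists>i. Suc k \<le> i \<and> i \<le> j \<and> snd (\<sigma> i) p = PopTrav d v)"
proof (cases "\<forall>i. \<exists>t\<ge>i. sched t = p")
  case True
  then obtain i0 where i0: "i0 \<ge> Suc k" "snd (\<sigma> i0) p = PopTrav d v"
    using reach[OF assms(1) assms(4)] by blast
  let ?S = "\<lambda>j. {i. Suc k \<le> i \<and> i < j \<and> sched i = p}"
  have "\<forall>j \<ge> Suc k. card (?S i0) + 1 \<le> card (?S j)
             \<longrightarrow> (\<exists>i. Suc k \<le> i \<and> i \<le> j \<and> snd (\<sigma> i) p = PopTrav d v)"
  proof (intro allI impI)
    fix j assume j: "Suc k \<le> j" "card (?S i0) + 1 \<le> card (?S j)"
    have "i0 \<le> j"
    proof (rule ccontr)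
      assume "\<not> i0 \<le> j"
      then have "?S j \<subseteq> ?S i0" by auto
      moreover have "finite (?S i0)" by (rule finite_subset[of _ "{..<i0}"]) auto
      ultimately have "card (?S j) \<le> card (?S i0)" by (rule card_mono[rotated])
      then show False using j by simp
    qed
    then show "\<exists>i. Suc k \<le> i \<and> i \<le> j \<and> snd (\<sigma> i) p = PopTrav d v" using i0 by blast
  qed
  then show ?thesis by blast
next
  case False
  then obtain i1 where i1: "\<And>t. t \<ge> i1 \<Longrightarrow> sched t \<noteq> p" by blast
  have "\<forall>j \<ge> Suc k. Suc i1 \<le> card {i. Suc k \<le> i \<and> i < j \<and> sched i = p}
             \<longrightarrow> (\<exists>i. Suc k \<le> i \<and> i \<le> j \<and> snd (\<sigma> i) p = PopTrav d v)"
  proof (intro allI impI)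
    fix j assume j: "Suc k \<le> j" "Suc i1 \<le> card {i. Suc k \<le> i \<and> i < j \<and> sched i = p}"
    have "{i. Suc k \<le> i \<and> i < j \<and> sched i = p} \<subseteq> {..<i1}"
    proof
      fix x assume "x \<in> {i. Suc k \<le> i \<and> i < j \<and> sched i = p}"
      then show "x \<in> {..<i1}" using i1[of x] by (cases "i1 \<le> x") auto
    qed
    then have "card {i. Suc k \<le> i \<and> i < j \<and> sched i = p} \<le> card {..<i1}" by (rule card_mono[rotated]) auto
    then show "\<exists>i. Suc k \<le> i \<and> i \<le> j \<and> snd (\<sigma> i) p = PopTrav d v" using j by simp
  qed
  then show ?thesis by blast
qed

end
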